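(* Let $\lambda$ be a partition and $\sigma:\operatorname{dg}(\lambda)\to\mathbb{Z}_{>0}$ any filling. For every positive integer $k$, $$\sum_{\substack{u\in\operatorname{dg}(\lambda)\\ \sigma(u)=k\ne\sigma(\mathrm N(u))}} t^{\operatorname{up}(\sigma,u)}=\sum_{\substack{u\in\operatorname{dg}(\lambda)\\ \sigma(u)=k\ne\sigma(\mathrm S(u))}} t^{\operatorname{down}(\sigma,u)}$$ as polynomials in $t$.
   Context: $\operatorname{dg}(\lambda)=\{(r,i):1\le i\le\ell(\lambda),\ 1\le r\le\lambda_i\}$ (row $r$ counted from the bottom, column $i$ from the left). For a cell $u=(r,c)$: $\mathrm S(u)=(r-1,c)$ and $\mathrm N(u)=(r+1,c)$; by convention $\sigma(\mathrm S(u))=\infty$ if $r=1$ and $\sigma(\mathrm N(u))=0$ if $r=\lambda_c$. The lower arm is $\operatorname{arm}(u)=\{(r,j)\in\operatorname{dg}(\lambda):j<c\}\cup\{(r-1,j)\in\operatorname{dg}(\lambda):j>c\}$ and the upper arm is $\operatorname{uarm}(u)=\{(r+1,j)\in\operatorname{dg}(\lambda):j<c\}\cup\{(r,j)\in\operatorname{dg}(\lambda):j>c\}$. Define $\operatorname{down}(\sigma,u)=\#\{y\in\operatorname{arm}(u):\sigma(y)=\sigma(u)\}$ when $\sigma(\mathrm S(u))\ne\sigma(u)$, and $\operatorname{up}(\sigma,u)=\#\{y\in\operatorname{uarm}(u):\sigma(y)=\sigma(u)\}$ when $\sigma(\mathrm N(u))\ne\sigma(u)$ (only these cases occur in the sums).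 *)

theory Defs
  imports "HOL-Computational_Algebra.Polynomial" "HOL-Library.Extended_Nat"
begin

definition is_partition :: "nat list \<Rightarrow> bool" where
  "is_partition lam \<longleftrightarrow> sorted (rev lam) \<and> (\<forall>x\<in>set lam. 0 < x)"

text \<open>Cells are pairs (r, i): row r (from the bottom), column i (from the left), 1-based.\<close>
definition dg :: "nat list \<Rightarrow> (nat \<times> nat) set" where
  "dg lam = {(r, i). 1 \<le> i \<and> i \<le> length lam \<and> 1 \<le> r \<and> r \<le> lam ! (i - 1)}"

definition sigma_S :: "nat list \<Rightarrow> (nat \<times> nat \<Rightarrow> nat) \<Rightarrow> nat \<times> nat \<Rightarrow> enat" where
  "sigma_S lam \<sigma> u = (case u of (r, c) \<Rightarrow> if r = 1 then \<infinity> else enat (\<sigma> (r - 1, c)))"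

definition sigma_N :: "nat list \<Rightarrow> (nat \<times> nat \<Rightarrow> nat) \<Rightarrow> nat \<times> nat \<Rightarrow> enat" where
  "sigma_N lam \<sigma> u = (case u of (r, c) \<Rightarrow> if r = lam ! (c - 1) then 0 else enat (\<sigma> (r + 1, c)))"

definition arm :: "nat list \<Rightarrow> nat \<times> nat \<Rightarrow> (nat \<times> nat) set" where
  "arm lam u = (case u of (r, c) \<Rightarrow>
     {(r', j). (r', j) \<in> dg lam \<and> ((r' = r \<and> j < c) \<or> (r' + 1 = r \<and> j > c))})"

definition uarm :: "nat list \<Rightarrow> nat \<times> nat \<Rightarrow> (nat \<times> nat) set" where
  "uarm lam u = (case u of (r, c) \<Rightarrow>
     {(r', j). (r', j) \<in> dg lam \<and> ((r' = r + 1 \<and> j < c) \<or> (r' = r \<and> j > c))})"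

definition down :: "nat list \<Rightarrow> (nat \<times> nat \<Rightarrow> nat) \<Rightarrow> nat \<times> nat \<Rightarrow> nat" where
  "down lam \<sigma> u = card {y \<in> arm lam u. \<sigma> y = \<sigma> u}"

definition up :: "nat list \<Rightarrow> (nat \<times> nat \<Rightarrow> nat) \<Rightarrow> nat \<times> nat \<Rightarrow> nat" where
  "up lam \<sigma> u = card {y \<in> uarm lam u. \<sigma> y = \<sigma> u}"

end

theory Submission
  imports Defs
begin
lemma path_sum:
  fixes f :: "nat \<Rightarrow> nat" and g :: "nat \<Rightarrow> 'a::ab_group_add"
  assumes st: "\<And>i. i < N \<Longrightarrow> f (Suc i) = f i \<or> f (Suc i) = Suc (f i) \<or> Suc (f (Suc i)) = f i"
  and e: "f N = f 0"
  shows "(\<Sum>i\<in>{i\<in>{..<N}. Suc (f (Suc i)) = f i}. g (f (Suc i)))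
       = (\<Sum>i\<in>{i\<in>{..<N}. f (Suc i) = Suc (f i)}. g (f i))"
proof -
  define G where "G n = (\<Sum>h<n. g h)" for n
  have GS: "G (Suc n) - G n = g n" for n by (simp add: G_def)
  have "(\<Sum>i<N. G (f (Suc i)) - G (f i)) = G (f N) - G (f 0)" by (rule sum_lessThan_telescope)
  hence 0: "(\<Sum>i<N. G (f (Suc i)) - G (f i)) = 0" using e by simp
  have "(\<Sum>i<N. G (f (Suc i)) - G (f i)) = (\<Sum>i<N. (if f (Suc i) = Suc (f i) then g (f i) else 0) - (if Suc (f (Suc i)) = f i then g (f (Suc i)) else 0))"
  proof (rule sum.cong)
    fix i assume "i \<in> {..<N}"
    then consider "f (Suc i) = f i" | "f (Suc i) = Suc (f i)" | "Suc (f (Suc i)) = f i" using st by auto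
    then show "G (f (Suc i)) - G (f i) = (if f (Suc i) = Suc (f i) then g (f i) else 0) - (if Suc (f (Suc i)) = f i then g (f (Suc i)) else 0)"
    proof cases
      case 3 then show ?thesis using GS[of "f (Suc i)"] by (auto simp: algebra_simps)
    qed (auto simp: GS)
  qed simp
  also have "\<dots> = (\<Sum>i\<in>{i\<in>{..<N}. f (Suc i) = Suc (f i)}. g (f i)) - (\<Sum>i\<in>{i\<in>{..<N}. Suc (f (Suc i)) = f i}. g (f (Suc i)))"
    by (simp only: sum_subtractf sum.inter_filter[OF finite_lessThan])
  finally show ?thesis using 0 by simp
qed

lemma suc_divmod:
  assumes "0 < (L::nat)"
  shows "(Suc i mod L = Suc (i mod L) \<and> Suc i div L = i div L) \<or> (Suc (i mod L) = L \<and> Suc i mod L = 0 \<and> Suc i div L = Suc (i div L))"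
  by (simp add: mod_Suc div_Suc)

lemma dg_mem: "(r, c) \<in> dg lam \<longleftrightarrow> 1 \<le> c \<and> c \<le> length lam \<and> 1 \<le> r \<and> r \<le> lam ! (c - 1)"
  by (simp add: dg_def)

lemma set_step1:
  "{y\<in>D. P y \<and> (fst y = r \<and> Suc (Suc c) \<le> snd y \<or> fst y = Suc r \<and> snd y < Suc (Suc c))} \<union> ({(r, Suc c)} \<inter> {y\<in>D. P y})
   = {y\<in>D. P y \<and> (fst y = r \<and> Suc c \<le> snd y \<or> fst y = Suc r \<and> snd y < Suc c)} \<union> ({(Suc r, Suc c)} \<inter> {y\<in>D. P y})"
  by (auto simp: le_Suc_eq less_Suc_eq)

lemma set_step2:
  assumes "\<forall>y\<in>D. 1 \<le> snd y \<and> snd y \<le> L"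
  shows "{y\<in>D. P y \<and> (fst y = Suc r \<and> Suc 0 \<le> snd y \<or> fst y = Suc (Suc r) \<and> snd y < Suc 0)} \<union> ({(r, L)} \<inter> {y\<in>D. P y})
   = {y\<in>D. P y \<and> (fst y = r \<and> L \<le> snd y \<or> fst y = Suc r \<and> snd y < L)} \<union> ({(Suc r, L)} \<inter> {y\<in>D. P y})"
  using assms by fastforce

lemma main_step:
  fixes lam :: "nat list" and \<sigma> :: "nat \<times> nat \<Rightarrow> nat" and k L :: nat
  assumes L: "L = length lam" "0 < L"
  defines "S \<equiv> \<lambda>i. {y \<in> dg lam. \<sigma> y = k \<and> ((fst y = i div L \<and> Suc (i mod L) \<le> snd y) \<or> (fst y = Suc (i div L) \<and> snd y < Suc (i mod L)))}"
  defines "KS \<equiv> {y \<in> dg lam. \<sigma> y = k}"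
  shows "S (Suc i) \<union> ({(i div L, Suc (i mod L))} \<inter> KS) = S i \<union> ({(Suc (i div L), Suc (i mod L))} \<inter> KS)"
    and "(i div L, Suc (i mod L)) \<notin> S (Suc i)"
    and "(Suc (i div L), Suc (i mod L)) \<notin> S i"
proof -
  have dgc: "\<forall>y\<in>dg lam. 1 \<le> snd y \<and> snd y \<le> L" using L by (auto simp: dg_def)
  show "(Suc (i div L), Suc (i mod L)) \<notin> S i" unfolding S_def by simp
  consider "Suc i mod L = Suc (i mod L)" "Suc i div L = i div L"
    | "Suc (i mod L) = L" "Suc i mod L = 0" "Suc i div L = Suc (i div L)"
    using suc_divmod[OF L(2), of i] by auto
  then show "S (Suc i) \<union> ({(i div L, Suc (i mod L))} \<inter> KS) = S i \<union> ({(Suc (i div L), Suc (i mod L))} \<inter> KS)"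
  proof cases
    case 1
    show ?thesis unfolding S_def KS_def 1 using set_step1[of "dg lam" "\<lambda>y. \<sigma> y = k" "i div L" "i mod L"] by simp
  next
    case 2
    show ?thesis unfolding S_def KS_def 2(2,3) unfolding 2(1) using set_step2[OF dgc, of "\<lambda>y. \<sigma> y = k" "i div L"] by simp
  qed
  show "(i div L, Suc (i mod L)) \<notin> S (Suc i)"
  proof
    assume "(i div L, Suc (i mod L)) \<in> S (Suc i)"
    then have h: "(i div L = Suc i div L \<and> Suc (Suc i mod L) \<le> Suc (i mod L)) \<or> (i div L = Suc (Suc i div L) \<and> Suc (i mod L) < Suc (Suc i mod L))"
      unfolding S_def by simp
    from suc_divmod[OF L(2), of i] h show False by linarith
  qed
qed

theorem lemma4p2:
  fixes lam :: "nat list" and \<sigma> :: "nat \<times> nat \<Rightarrow> nat" and k :: nat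
  assumes "is_partition lam"
    and "\<forall>u\<in>dg lam. 0 < \<sigma> u"
    and "0 < k"
  shows "(\<Sum>u\<in>{u \<in> dg lam. \<sigma> u = k \<and> sigma_N lam \<sigma> u \<noteq> enat k}.
            monom (1::int) (up lam \<sigma> u))
       = (\<Sum>u\<in>{u \<in> dg lam. \<sigma> u = k \<and> sigma_S lam \<sigma> u \<noteq> enat k}.
            monom (1::int) (down lam \<sigma> u))"
proof (cases "lam = []")
  case True
  then have "dg lam = {}" by (simp add: dg_def)
  then show ?thesis by simp
next
  case False
  define L where "L = length lam"
  have L0: "0 < L" using False L_def by simp
  define R where "R = sum_list lam"
  have hR: "j < L \<Longrightarrow> lam ! j \<le> R" for j unfolding R_def L_def
    by (simp add: elem_le_sum_list)
  define N where "N = Suc R * L"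
  define K where "K x \<longleftrightarrow> x \<in> dg lam \<and> \<sigma> x = k" for x
  define KS where "KS = {y \<in> dg lam. \<sigma> y = k}"
  define p where "p i = (i div L, Suc (i mod L))" for i
  define q where "q i = (Suc (i div L), Suc (i mod L))" for i
  define S where "S i = {y \<in> dg lam. \<sigma> y = k \<and> ((fst y = i div L \<and> Suc (i mod L) \<le> snd y) \<or> (fst y = Suc (i div L) \<and> snd y < Suc (i mod L)))}" for i
  define C where "C i = card (S i)" for i
  have dgmem: "(a, b) \<in> dg lam \<longleftrightarrow> 1 \<le> b \<and> b \<le> L \<and> 1 \<le> a \<and> a \<le> lam ! (b - 1)" for a b
    by (simp add: dg_def L_def)
  have dgsub: "dg lam \<subseteq> {0..R} \<times> {0..L}"
  proof
    fix x assume "x \<in> dg lam"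
    then obtain a b where x: "x = (a,b)" "1 \<le> b" "b \<le> L" "a \<le> lam ! (b - 1)" by (cases x) (auto simp: dgmem)
    then have "lam ! (b-1) \<le> R" using hR[of "b-1"] by simp
    then show "x \<in> {0..R} \<times> {0..L}" using x by auto
  qed
  have fdg: "finite (dg lam)" by (rule finite_subset[OF dgsub]) auto
  have finS: "finite (S i)" for i unfolding S_def using fdg by simp
  have KKS: "K x \<longleftrightarrow> x \<in> KS" for x by (simp add: K_def KS_def)
  have step: "C (Suc i) + (if K (p i) then 1 else 0) = C i + (if K (q i) then 1 else 0)" for i
  proof -
    note ms = main_step[OF L_def L0, where \<sigma>=\<sigma> and k=k and i=i, folded S_def KS_def]
    have e: "card (S (Suc i) \<union> ({p i} \<inter> KS)) = card (S i \<union> ({q i} \<inter> KS))"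
      using ms(1) unfolding p_def q_def by simp
    have "card (S (Suc i) \<union> ({p i} \<inter> KS)) = C (Suc i) + (if K (p i) then 1 else 0)"
      using ms(2) finS unfolding C_def p_def[symmetric] by (auto simp: KKS card_insert_if)
    moreover have "card (S i \<union> ({q i} \<inter> KS)) = C i + (if K (q i) then 1 else 0)"
      using ms(3) finS unfolding C_def q_def[symmetric] by (auto simp: KKS card_insert_if)
    ultimately show ?thesis using e by simp
  qed
  have "S 0 = {}" unfolding S_def by (force simp: dg_def)
  then have C0: "C 0 = 0" by (simp add: C_def)
  have CN: "C N = 0"
  proof -
    have "N div L = Suc R" "N mod L = 0" using L0 by (auto simp: N_def)
    moreover have "\<And>a b. (a,b) \<in> dg lam \<Longrightarrow> a \<le> R" using dgsub by auto
    ultimately have "S N = {}" unfolding S_def by fastforce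
    then show ?thesis by (simp add: C_def)
  qed
  have steps: "C (Suc i) = C i \<or> C (Suc i) = Suc (C i) \<or> Suc (C (Suc i)) = C i" for i
    using step[of i] by (auto split: if_splits)
  define Top where "Top = {u \<in> dg lam. \<sigma> u = k \<and> sigma_N lam \<sigma> u \<noteq> enat k}"
  define Bot where "Bot = {u \<in> dg lam. \<sigma> u = k \<and> sigma_S lam \<sigma> u \<noteq> enat k}"
  define A where "A = {i \<in> {..<N}. K (p i) \<and> \<not> K (q i)}"
  define B where "B = {i \<in> {..<N}. K (q i) \<and> \<not> K (p i)}"
  have injp: "inj_on p {..<N}"
  proof (rule inj_onI)
    fix x y assume "p x = p y"
    then have "x div L = y div L" "x mod L = y mod L" by (auto simp: p_def)
    then show "x = y" by (metis div_mult_mod_eq)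
  qed
  have injq: "inj_on q {..<N}"
  proof (rule inj_onI)
    fix x y assume "q x = q y"
    then have "x div L = y div L" "x mod L = y mod L" by (auto simp: q_def)
    then show "x = y" by (metis div_mult_mod_eq)
  qed
  have ps: "u \<in> dg lam \<Longrightarrow> \<exists>i<N. p i = u" for u
  proof -
    assume u: "u \<in> dg lam"
    then obtain a b where ab: "u = (a,b)" "1 \<le> b" "b \<le> L" "1 \<le> a" "a \<le> lam ! (b - 1)"
      by (cases u) (auto simp: dgmem)
    have "b - 1 < L" using ab by simp
    then have aR: "a \<le> R" using ab hR[of "b-1"] by simp
    define i where "i = a * L + (b - 1)"
    have "i < Suc a * L" using ab by (simp add: i_def)
    also have "\<dots> \<le> N" unfolding N_def using aR by simp
    finally have "i < N" .
    moreover have "p i = u"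
    proof -
      have cL: "b - 1 < L" using ab by simp
      have d: "i div L = a" unfolding i_def using cL by simp
      have m: "i mod L = b - 1" unfolding i_def using cL by simp
      show ?thesis using ab d m by (simp add: p_def)
    qed
    ultimately show ?thesis by blast
  qed
  have qs: "u \<in> dg lam \<Longrightarrow> \<exists>i<N. q i = u" for u
  proof -
    assume u: "u \<in> dg lam"
    then obtain a b where ab: "u = (a,b)" "1 \<le> b" "b \<le> L" "1 \<le> a" "a \<le> lam ! (b - 1)"
      by (cases u) (auto simp: dgmem)
    have "b - 1 < L" using ab by simp
    then have aR: "a \<le> R" using ab hR[of "b-1"] by simp
    define i where "i = (a - 1) * L + (b - 1)"
    have aL: "a * L = (a - 1) * L + L" using ab by (cases a) auto
    have "i < a * L" using ab aL unfolding i_def by linarith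
    also have "\<dots> \<le> Suc R * L" using aR by (intro mult_le_mono1) simp
    also have "\<dots> = N" unfolding N_def ..
    finally have "i < N" .
    moreover have "q i = u"
    proof -
      have cL: "b - 1 < L" using ab by simp
      have d: "i div L = a - 1" unfolding i_def using cL by simp
      have m: "i mod L = b - 1" unfolding i_def using cL by simp
      show ?thesis using ab d m by (simp add: q_def)
    qed
    ultimately show ?thesis by blast
  qed
  have bL: "Suc (i mod L) \<le> L" for i using L0 by (simp add: Suc_leI)
  have pTop: "p i \<in> Top \<longleftrightarrow> K (p i) \<and> \<not> K (q i)" for i
  proof (cases "K (p i)")
    case True
    then have mem: "i div L \<le> lam ! (i mod L)" by (simp add: K_def p_def dgmem)
    show ?thesis
    proof (cases "i div L = lam ! (i mod L)")
      case True
      then show ?thesis using \<open>K (p i)\<close> assms(3)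
        by (auto simp: Top_def K_def p_def q_def dgmem sigma_N_def zero_enat_def)
    next
      case False
      then show ?thesis using \<open>K (p i)\<close> mem bL[of i]
        by (auto simp: Top_def K_def p_def q_def dgmem sigma_N_def)
    qed
  qed (auto simp: Top_def K_def)
  have qBot: "q i \<in> Bot \<longleftrightarrow> K (q i) \<and> \<not> K (p i)" for i
  proof (cases "K (q i)")
    case True
    then have mem: "Suc (i div L) \<le> lam ! (i mod L)" by (simp add: K_def q_def dgmem)
    show ?thesis
    proof (cases "i div L = 0")
      case True
      then show ?thesis using \<open>K (q i)\<close>
        by (auto simp: Bot_def K_def p_def q_def dgmem sigma_S_def)
    next
      case False
      then show ?thesis using \<open>K (q i)\<close> mem bL[of i]
        by (auto simp: Bot_def K_def p_def q_def dgmem sigma_S_def)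
    qed
  qed (auto simp: Bot_def K_def)
  have Top_eq: "Top = p ` A"
  proof
    show "Top \<subseteq> p ` A"
    proof
      fix u assume "u \<in> Top"
      then have "u \<in> dg lam" by (simp add: Top_def)
      then obtain i where "i < N" "p i = u" using ps by blast
      then show "u \<in> p ` A" using pTop[of i] \<open>u \<in> Top\<close> by (auto simp: A_def)
    qed
  qed (use pTop in \<open>auto simp: A_def\<close>)
  have Bot_eq: "Bot = q ` B"
  proof
    show "Bot \<subseteq> q ` B"
    proof
      fix u assume "u \<in> Bot"
      then have "u \<in> dg lam" by (simp add: Bot_def)
      then obtain i where "i < N" "q i = u" using qs by blast
      then show "u \<in> q ` B" using qBot[of i] \<open>u \<in> Bot\<close> by (auto simp: B_def)
    qed
  qed (use qBot in \<open>auto simp: B_def\<close>)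
  have upC: "i \<in> A \<Longrightarrow> up lam \<sigma> (p i) = C (Suc i)" for i
  proof -
    assume "i \<in> A"
    then have Kp: "K (p i)" and nKq: "\<not> K (q i)" by (auto simp: A_def)
    have sk: "\<sigma> (p i) = k" using Kp by (simp add: K_def)
    have "S i = insert (p i) {y \<in> uarm lam (p i). \<sigma> y = \<sigma> (p i)}"
      using Kp sk unfolding S_def uarm_def K_def p_def by auto
    moreover have "p i \<notin> {y \<in> uarm lam (p i). \<sigma> y = \<sigma> (p i)}" by (auto simp: uarm_def p_def)
    moreover have "finite {y \<in> uarm lam (p i). \<sigma> y = \<sigma> (p i)}"
      by (rule finite_subset[OF _ fdg]) (auto simp: uarm_def p_def)
    ultimately have "C i = Suc (up lam \<sigma> (p i))" by (simp add: C_def up_def)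
    then show ?thesis using step[of i] Kp nKq by simp
  qed
  have downC: "i \<in> B \<Longrightarrow> down lam \<sigma> (q i) = C i" for i
  proof -
    assume "i \<in> B"
    then have Kq: "K (q i)" and nKp: "\<not> K (p i)" by (auto simp: B_def)
    have sk: "\<sigma> (q i) = k" using Kq by (simp add: K_def)
    have "S i = {y \<in> arm lam (q i). \<sigma> y = \<sigma> (q i)}"
      using nKp sk unfolding S_def arm_def K_def p_def q_def by auto
    then show ?thesis by (simp add: C_def down_def)
  qed
  have injA: "inj_on p A" by (rule inj_on_subset[OF injp]) (auto simp: A_def)
  have injB: "inj_on q B" by (rule inj_on_subset[OF injq]) (auto simp: B_def)
  have A_eq: "A = {i \<in> {..<N}. Suc (C (Suc i)) = C i}"
  proof -
    have "(K (p i) \<and> \<not> K (q i)) \<longleftrightarrow> Suc (C (Suc i)) = C i" for i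
      using step[of i] by (cases "K (p i)"; cases "K (q i)") auto
    then show ?thesis unfolding A_def by blast
  qed
  have B_eq: "B = {i \<in> {..<N}. C (Suc i) = Suc (C i)}"
  proof -
    have "(K (q i) \<and> \<not> K (p i)) \<longleftrightarrow> C (Suc i) = Suc (C i)" for i
      using step[of i] by (cases "K (p i)"; cases "K (q i)") auto
    then show ?thesis unfolding B_def by blast
  qed
  have "(\<Sum>u\<in>Top. monom (1::int) (up lam \<sigma> u)) = (\<Sum>i\<in>A. monom 1 (up lam \<sigma> (p i)))"
    unfolding Top_eq by (rule sum.reindex[OF injA, unfolded comp_def])
  also have "\<dots> = (\<Sum>i\<in>A. monom 1 (C (Suc i)))" using upC by simp
  also have "\<dots> = (\<Sum>i\<in>B. monom 1 (C i))" unfolding A_eq B_eq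
    by (rule path_sum) (use steps CN C0 in auto)
  also have "\<dots> = (\<Sum>i\<in>B. monom 1 (down lam \<sigma> (q i)))" using downC by simp
  also have "\<dots> = (\<Sum>u\<in>Bot. monom (1::int) (down lam \<sigma> u))"
    unfolding Bot_eq by (rule sum.reindex[OF injB, unfolded comp_def, symmetric])
  finally show ?thesis unfolding Top_def Bot_def .
qed
end
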